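(* Let $N, N_y, M, p \in \mathbb{N}$ with $p\le N$, $X \in \mathbb{R}^{N \times M}$, $Y \in \mathbb{R}^{N_y \times M}$, $\lambda \ge 0$, $\Omega=\{1,\dots,N\}$, let $\bar S_0\subset\cdots\subset\bar S_p$ with feasible sets $\mathcal{I}_1,\dots,\mathcal{I}_p$ be a greedy sequence, and let $\xi^{(k)},\theta^{(k)},\Xi^{(k)},\Theta^{(k)}$ be defined as in the context. Let $f_i^{(k)} := \|(Q^{xy}_i(\bar S_k))^\top\|^2$ and $g_i^{(k)} := Q^{xx}_{i,i}(\bar S_k)$. Then for any $k\in\{1,\dots,p\}$ and $i \in \mathcal{I}_k$, \begin{align*} f_i^{(k)} &= f_i^{(k-1)} - \xi^{(k)}_i\Bigl(2X_iY^\top\theta^{(k)} - 2\,\Xi^{(k-1)}_i \Theta^{(k-1)\top}\theta^{(k)} - \|\theta^{(k)}\|^2 \xi^{(k)}_i\Bigr),\\ g_i^{(k)} &= g_i^{(k-1)} - \xi^{(k)}_i\xi^{(k)}_i. \end{align*}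
   Context: Notation: for a matrix $A$ and an ordered index set $S$, $A_S$ is the submatrix of rows indexed by $S$, $A_{S,S}$ the principal submatrix; $A_i$ is row $i$ of $A$, $A_{i,i}$ its $(i,i)$ entry; $v_i$ is the $i$th component of vector $v$; $\|\cdot\|$ is the Euclidean norm; $(I_N)_s^\top$ is the $s$th canonical unit vector. $P^{xx} = XX^\top + \lambda I_N$, $P^{xy} = XY^\top$. $Q^{xx}(\emptyset)=P^{xx}$, $Q^{xy}(\emptyset)=P^{xy}$, and for $|S|\ge1$ with $P^{xx}_{S,S}\succ0$: $Q^{xx}(S) = P^{xx} - (P^{xx}_S)^\top (P^{xx}_{S,S})^{-1} P^{xx}_S$, $Q^{xy}(S) = P^{xy} - (P^{xx}_S)^\top (P^{xx}_{S,S})^{-1} P^{xy}_S$. $J(S) = \operatorname{tr}\{ Y X_S^\top (X_S X_S^\top + \lambda I_{|S|})^{-1} X_S Y^\top \}$ for feasible $S$, $J(\emptyset)=0$. Greedy sequence: $\bar S_0=\emptyset$; for $k=1,\dots,p$, $\mathcal{I}_k = \{ i\in\Omega\setminus\bar S_{k-1} : P^{xx}_{S',S'}\succ0,\ S'=\bar S_{k-1}\cup\{i\}\}$ (assumed nonempty), $\bar s_k \in \arg\max_{i\in\mathcal{I}_k}\{J(\bar S_{k-1}\cup\{i\}) - J(\bar S_{k-1})\}$, $\bar S_k = \bar S_{k-1}\cup\{\bar s_k\}$. Recursion, starting from empty $\Xi^{(0)}\in\mathbb{R}^{N\times0}$, $\Theta^{(0)}\in\mathbb{R}^{N_y\times0}$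 (products with them equal to zero): $\delta^{(k)} = X X_{\bar s_k}^\top + \lambda (I_N)_{\bar s_k}^\top - \Xi^{(k-1)}(\Xi^{(k-1)}_{\bar s_k})^\top$, $\xi^{(k)} = \delta^{(k)}/\sqrt{\delta^{(k)}_{\bar s_k}}$, $\theta^{(k)} = (Y X_{\bar s_k}^\top - \Theta^{(k-1)}(\Xi^{(k-1)}_{\bar s_k})^\top)/\sqrt{\delta^{(k)}_{\bar s_k}}$, $\Xi^{(k)}=[\Xi^{(k-1)},\xi^{(k)}]$, $\Theta^{(k)}=[\Theta^{(k-1)},\theta^{(k)}]$. *)

theory Defs
  imports "Jordan_Normal_Form.Gauss_Jordan_Elimination" "Jordan_Normal_Form.DL_Submatrix"
begin

text \<open>Matrices are Jordan_Normal_Form matrices; indices are 0-based, so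
  Omega = {0..<N}. Rows of a matrix indexed by a set S are taken in increasing
  order (the quantities below do not depend on the order).\<close>

definition Pxx :: "real mat \<Rightarrow> real \<Rightarrow> real mat" where
  "Pxx X lam = X * transpose_mat X + lam \<cdot>\<^sub>m 1\<^sub>m (dim_row X)"

definition Pxy :: "real mat \<Rightarrow> real mat \<Rightarrow> real mat" where
  "Pxy X Y = X * transpose_mat Y"

definition rows_of :: "'a mat \<Rightarrow> nat set \<Rightarrow> 'a mat" where
  "rows_of A S = submatrix A S UNIV"

definition prin_sub :: "'a mat \<Rightarrow> nat set \<Rightarrow> 'a mat" where
  "prin_sub A S = submatrix A S S"

definition pos_def_mat :: "real mat \<Rightarrow> bool" where
  "pos_def_mat A \<longleftrightarrow> A \<in> carrier_mat (dim_row A) (dim_row A) \<and>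
     (\<forall>v \<in> carrier_vec (dim_row A). v \<noteq> 0\<^sub>v (dim_row A) \<longrightarrow> v \<bullet> (A *\<^sub>v v) > 0)"

definition minv :: "real mat \<Rightarrow> real mat" where
  "minv A = the (mat_inverse A)"

definition mtrace :: "real mat \<Rightarrow> real" where
  "mtrace A = (\<Sum>i<dim_row A. A $$ (i, i))"

definition feasible :: "real mat \<Rightarrow> real \<Rightarrow> nat set \<Rightarrow> bool" where
  "feasible X lam S \<longleftrightarrow> pos_def_mat (prin_sub (Pxx X lam) S)"

definition Qxx :: "real mat \<Rightarrow> real \<Rightarrow> nat set \<Rightarrow> real mat" where
  "Qxx X lam S = (if S = {} then Pxx X lam else
     Pxx X lam - transpose_mat (rows_of (Pxx X lam) S) * minv (prin_sub (Pxx X lam) S)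
                 * rows_of (Pxx X lam) S)"

definition Qxy :: "real mat \<Rightarrow> real mat \<Rightarrow> real \<Rightarrow> nat set \<Rightarrow> real mat" where
  "Qxy X Y lam S = (if S = {} then Pxy X Y else
     Pxy X Y - transpose_mat (rows_of (Pxx X lam) S) * minv (prin_sub (Pxx X lam) S)
                 * rows_of (Pxy X Y) S)"

definition Jfun :: "real mat \<Rightarrow> real mat \<Rightarrow> real \<Rightarrow> nat set \<Rightarrow> real" where
  "Jfun X Y lam S = (if S = {} then 0 else
     mtrace (Y * transpose_mat (rows_of X S)
       * minv (rows_of X S * transpose_mat (rows_of X S) + lam \<cdot>\<^sub>m 1\<^sub>m (card S))
       * rows_of X S * transpose_mat Y))"

definition Sbar :: "(nat \<Rightarrow> nat) \<Rightarrow> nat \<Rightarrow> nat set" where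
  "Sbar sb k = sb ` {1..k}"

definition Ifeas :: "real mat \<Rightarrow> real \<Rightarrow> (nat \<Rightarrow> nat) \<Rightarrow> nat \<Rightarrow> nat set" where
  "Ifeas X lam sb k = {i \<in> {0..<dim_row X} - Sbar sb (k - 1).
       feasible X lam (Sbar sb (k - 1) \<union> {i})}"

definition is_greedy :: "real mat \<Rightarrow> real mat \<Rightarrow> real \<Rightarrow> nat \<Rightarrow> (nat \<Rightarrow> nat) \<Rightarrow> bool" where
  "is_greedy X Y lam p sb \<longleftrightarrow> (\<forall>k \<in> {1..p}.
      Ifeas X lam sb k \<noteq> {} \<and> sb k \<in> Ifeas X lam sb k \<and>
      (\<forall>i \<in> Ifeas X lam sb k.
         Jfun X Y lam (Sbar sb (k - 1) \<union> {i}) - Jfun X Y lam (Sbar sb (k - 1))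
         \<le> Jfun X Y lam (Sbar sb k) - Jfun X Y lam (Sbar sb (k - 1))))"

text \<open>The recursion: XiTh X Y lam sb k = (Xi^(k), Theta^(k)), each a list of k
  columns; a column xi^(l) is a function i \<mapsto> xi^(l)_i (i < N), and theta^(l)
  is j \<mapsto> theta^(l)_j (j < N_y). Column l-1 of the lists is xi^(l).\<close>
fun XiTh :: "real mat \<Rightarrow> real mat \<Rightarrow> real \<Rightarrow> (nat \<Rightarrow> nat) \<Rightarrow> nat
    \<Rightarrow> (nat \<Rightarrow> real) list \<times> (nat \<Rightarrow> real) list" where
  "XiTh X Y lam sb 0 = ([], [])"
| "XiTh X Y lam sb (Suc k) =
    (let (Xi, Th) = XiTh X Y lam sb k;
         s = sb (Suc k);
         d = (\<lambda>i. (X * transpose_mat X) $$ (i, s) + (if i = s then lam else 0)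
                  - (\<Sum>l<k. (Xi ! l) i * (Xi ! l) s));
         r = sqrt (d s);
         xi = (\<lambda>i. d i / r);
         th = (\<lambda>j. ((Y * transpose_mat X) $$ (j, s) - (\<Sum>l<k. (Th ! l) j * (Xi ! l) s)) / r)
     in (Xi @ [xi], Th @ [th]))"

definition xi :: "real mat \<Rightarrow> real mat \<Rightarrow> real \<Rightarrow> (nat \<Rightarrow> nat) \<Rightarrow> nat \<Rightarrow> nat \<Rightarrow> real" where
  "xi X Y lam sb k = fst (XiTh X Y lam sb k) ! (k - 1)"

definition theta :: "real mat \<Rightarrow> real mat \<Rightarrow> real \<Rightarrow> (nat \<Rightarrow> nat) \<Rightarrow> nat \<Rightarrow> nat \<Rightarrow> real" where
  "theta X Y lam sb k = snd (XiTh X Y lam sb k) ! (k - 1)"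

definition f_val :: "real mat \<Rightarrow> real mat \<Rightarrow> real \<Rightarrow> (nat \<Rightarrow> nat) \<Rightarrow> nat \<Rightarrow> nat \<Rightarrow> real" where
  "f_val X Y lam sb k i = (\<Sum>j<dim_row Y. (Qxy X Y lam (Sbar sb k) $$ (i, j))^2)"

definition g_val :: "real mat \<Rightarrow> real \<Rightarrow> (nat \<Rightarrow> nat) \<Rightarrow> nat \<Rightarrow> nat \<Rightarrow> real" where
  "g_val X lam sb k i = Qxx X lam (Sbar sb k) $$ (i, i)"

end

theory Submission
  imports Defs "Jordan_Normal_Form.Determinant"
begin

lemma pick_bij: assumes "finite S" shows "bij_betw (pick S) {..<card S} S"
proof (rule bij_betw_imageI)
  show "inj_on (pick S) {..<card S}"
  proof (rule inj_onI)
    fix x y assume x: "x \<in> {..<card S}" and y: "y \<in> {..<card S}" and e: "pick S x = pick S y"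
    have "x = card {a\<in>S. a < pick S x}" using card_pick_le x by simp
    also have "\<dots> = card {a\<in>S. a < pick S y}" using e by simp
    also have "\<dots> = y" using card_pick_le y by simp
    finally show "x = y" .
  qed
  show "pick S ` {..<card S} = S"
  proof
    show "pick S ` {..<card S} \<subseteq> S" using pick_in_set_le by auto
    show "S \<subseteq> pick S ` {..<card S}"
    proof
      fix t assume t: "t \<in> S"
      have "{a\<in>S. a < t} \<subset> S" using t by auto
      hence lt: "card {a\<in>S. a < t} < card S" using assms psubset_card_mono by blast
      have "t = pick S (card {a\<in>S. a < t})" using pick_card_in_set[OF t] by simp
      thus "t \<in> pick S ` {..<card S}" using lt by blast
    qed
  qed
qed

lemma sum_pick: "finite S \<Longrightarrow> (\<Sum>a<card S. f (pick S a)) = sum f S"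
  using sum.reindex_bij_betw[OF pick_bij] by blast

lemma mult_entry:
  assumes "A \<in> carrier_mat a b" "C \<in> carrier_mat b c" "i < a" "j < c"
  shows "(A * C) $$ (i,j) = (\<Sum>k<b. A $$ (i,k) * C $$ (k,j))"
  using assms by (simp add: scalar_prod_def atLeast0LessThan)

lemma mult_vec_entry:
  assumes "A \<in> carrier_mat a b" "v \<in> carrier_vec b" "i < a"
  shows "(A *\<^sub>v v) $ i = (\<Sum>k<b. A $$ (i,k) * v $ k)"
  using assms by (simp add: scalar_prod_def atLeast0LessThan)

lemma pick_lt: "finite S \<Longrightarrow> a < card S \<Longrightarrow> pick S a \<in> S"
  using pick_in_set_le by auto

lemma prin_sub_facts:
  fixes P :: "'a mat"
  assumes P: "P \<in> carrier_mat N N" and sub: "S \<subseteq> {..<N}"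
  shows "prin_sub P S \<in> carrier_mat (card S) (card S)"
    and "a < card S \<Longrightarrow> b < card S \<Longrightarrow> prin_sub P S $$ (a,b) = P $$ (pick S a, pick S b)"
proof -
  have dr: "dim_row P = N" "dim_col P = N" using P by auto
  have se: "{i. i < dim_row P \<and> i \<in> S} = S" using dr sub by auto
  have se': "{i. i < dim_col P \<and> i \<in> S} = S" using dr sub by auto
  have d1: "dim_row (submatrix P S S) = card S" by (simp only: dim_submatrix(1) se)
  have d2: "dim_col (submatrix P S S) = card S" by (simp only: dim_submatrix(2) se')
  show "prin_sub P S \<in> carrier_mat (card S) (card S)"
    unfolding prin_sub_def using d1 d2 by (rule carrier_matI)
  show "a < card S \<Longrightarrow> b < card S \<Longrightarrow> prin_sub P S $$ (a,b) = P $$ (pick S a, pick S b)"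
    unfolding prin_sub_def by (rule submatrix_index) (simp_all only: se se')
qed

lemma rows_of_facts:
  fixes B :: "'a mat"
  assumes B: "B \<in> carrier_mat N n" and sub: "S \<subseteq> {..<N}"
  shows "rows_of B S \<in> carrier_mat (card S) n"
    and "a < card S \<Longrightarrow> j < n \<Longrightarrow> rows_of B S $$ (a,j) = B $$ (pick S a, j)"
proof -
  have dr: "dim_row B = N" "dim_col B = n" using B by auto
  have se: "{i. i < dim_row B \<and> i \<in> S} = S" using dr sub by auto
  have se': "card {i. i < dim_col B \<and> i \<in> UNIV} = n" using dr by simp
  have d1: "dim_row (submatrix B S UNIV) = card S" by (simp only: dim_submatrix(1) se)
  have d2: "dim_col (submatrix B S UNIV) = n" by (simp only: dim_submatrix(2) se')
  show "rows_of B S \<in> carrier_mat (card S) n"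
    unfolding rows_of_def using d1 d2 by (rule carrier_matI)
  assume a: "a < card S" and j: "j < n"
  have "submatrix B S UNIV $$ (a,j) = B $$ (pick S a, pick UNIV j)"
    by (rule submatrix_index) (use a j in \<open>simp_all only: se se'\<close>)
  thus "rows_of B S $$ (a,j) = B $$ (pick S a, j)" unfolding rows_of_def pick_UNIV .
qed

lemma pos_schur:
  fixes P :: "real mat" and T c :: "nat \<Rightarrow> real"
  assumes P: "P \<in> carrier_mat N N" and sub: "insert s S \<subseteq> {..<N}" and sS: "s \<notin> S"
    and pd: "pos_def_mat (prin_sub P (insert s S))"
    and rep: "\<forall>i<N. T i = P $$ (i,s) - (\<Sum>t\<in>S. P $$ (i,t) * c t)"
    and zero: "\<forall>t\<in>S. T t = 0"
  shows "T s > 0"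
proof -
  let ?S = "insert s S"
  let ?m = "card ?S"
  let ?M = "prin_sub P ?S"
  have fin: "finite ?S" using finite_subset[OF sub] by simp
  hence finS: "finite S" by simp
  note PF = prin_sub_facts[OF P sub]
  define w where "w u = (if u = s then 1 else - c u)" for u
  define v where "v = vec ?m (\<lambda>a. w (pick ?S a))"
  have v: "v \<in> carrier_vec ?m" unfolding v_def by simp
  have Mv: "(?M *\<^sub>v v) $ a = T (pick ?S a)" if a: "a < ?m" for a
  proof -
    have pa: "pick ?S a < N" using pick_lt[OF fin a] sub by auto
    have "(?M *\<^sub>v v) $ a = (\<Sum>b<?m. ?M $$ (a,b) * v $ b)"
      using mult_vec_entry[OF PF(1) v a] .
    also have "\<dots> = (\<Sum>b<?m. P $$ (pick ?S a, pick ?S b) * w (pick ?S b))"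
      using PF(2)[OF a] by (simp add: v_def)
    also have "\<dots> = (\<Sum>u\<in>?S. P $$ (pick ?S a, u) * w u)"
      using sum_pick[OF fin, of "\<lambda>u. P $$ (pick ?S a, u) * w u"] .
    also have "\<dots> = P $$ (pick ?S a, s) + (\<Sum>t\<in>S. P $$ (pick ?S a, t) * (- c t))"
    proof -
      have e: "(\<Sum>t\<in>S. P $$ (pick ?S a, t) * w t) = (\<Sum>t\<in>S. P $$ (pick ?S a, t) * (- c t))"
        using sS by (intro sum.cong) (auto simp: w_def)
      have ws: "w s = 1" by (simp add: w_def)
      show ?thesis using finS sS ws e by simp
    qed
    also have "\<dots> = T (pick ?S a)" using rep pa by (simp add: sum_negf)
    finally show ?thesis .
  qed
  have "v \<bullet> (?M *\<^sub>v v) = (\<Sum>a<?m. v $ a * (?M *\<^sub>v v) $ a)"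
    using PF(1) by (simp add: scalar_prod_def atLeast0LessThan)
  also have "\<dots> = (\<Sum>a<?m. w (pick ?S a) * T (pick ?S a))"
    using Mv by (simp add: v_def)
  also have "\<dots> = (\<Sum>u\<in>?S. w u * T u)" using sum_pick[OF fin] .
  also have "\<dots> = T s" using finS sS zero by (simp add: w_def)
  finally have vMv: "v \<bullet> (?M *\<^sub>v v) = T s" .
  have "s \<in> pick ?S ` {..<?m}" using bij_betw_imp_surj_on[OF pick_bij[OF fin]] by simp
  then obtain a0 where a0: "a0 < ?m" "pick ?S a0 = s" by auto
  have "v $ a0 = 1" using a0 by (simp add: v_def w_def)
  hence "v \<noteq> 0\<^sub>v ?m" using a0 by auto
  moreover have "dim_row ?M = ?m" using PF(1) by simp
  ultimately have "v \<bullet> (?M *\<^sub>v v) > 0" using pd v unfolding pos_def_mat_def by auto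
  thus ?thesis using vMv by simp
qed

lemma Q_char:
  fixes P B :: "real mat" and T L :: "nat \<Rightarrow> nat \<Rightarrow> real"
  assumes P: "P \<in> carrier_mat N N" and B: "B \<in> carrier_mat N n"
    and sym: "\<forall>i<N. \<forall>j<N. P $$ (i,j) = P $$ (j,i)"
    and sub: "S \<subseteq> {..<N}" and pd: "pos_def_mat (prin_sub P S)"
    and rep: "\<forall>i<N. \<forall>j<n. T i j = B $$ (i,j) - (\<Sum>t\<in>S. P $$ (i,t) * L t j)"
    and zero: "\<forall>t\<in>S. \<forall>j<n. T t j = 0"
    and ij: "i < N" "j < n"
  shows "(B - transpose_mat (rows_of P S) * minv (prin_sub P S) * rows_of B S) $$ (i,j) = T i j"
proof -
  let ?m = "card S"
  let ?M = "prin_sub P S"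
  let ?R = "rows_of P S"
  let ?RB = "rows_of B S"
  have fin: "finite S" using finite_subset[OF sub] by simp
  note PF = prin_sub_facts[OF P sub]
  note RF = rows_of_facts[OF P sub]
  note RBF = rows_of_facts[OF B sub]
  have pS: "a < ?m \<Longrightarrow> pick S a < N" for a using pick_lt[OF fin] sub by auto
  have "det ?M \<noteq> 0"
  proof
    assume "det ?M = 0"
    then obtain v where v: "v \<in> carrier_vec ?m" "v \<noteq> 0\<^sub>v ?m" "?M *\<^sub>v v = 0\<^sub>v ?m"
      using det_0_iff_vec_prod_zero[OF PF(1)] by blast
    have "v \<bullet> (?M *\<^sub>v v) = 0" using v by simp
    moreover have "v \<bullet> (?M *\<^sub>v v) > 0" using pd v PF(1) unfolding pos_def_mat_def by auto
    ultimately show False by simp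
  qed
  hence U: "?M \<in> Units (ring_mat TYPE(real) ?m ())"
    by (rule det_non_zero_imp_unit[OF PF(1)])
  have "mat_inverse ?M \<noteq> None"
  proof
    assume "mat_inverse ?M = None"
    hence "?M \<notin> Units (ring_mat TYPE(real) ?m ())" by (rule mat_inverse(1)[OF PF(1)])
    thus False using U by blast
  qed
  then obtain Mi where Mi: "mat_inverse ?M = Some Mi" by blast
  have MMi: "?M * Mi = 1\<^sub>m ?m" and Mic: "Mi \<in> carrier_mat ?m ?m"
    using mat_inverse(2)[OF PF(1) Mi] by auto
  have minv: "minv ?M = Mi" using Mi by (simp add: minv_def)
  define K where "K = Mi * ?RB"
  have Kc: "K \<in> carrier_mat ?m n" using Mic RBF(1) by (simp add: K_def)
  have MK: "?M * K = ?RB"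
  proof -
    have "?M * K = (?M * Mi) * ?RB" unfolding K_def
      using assoc_mult_mat[OF PF(1) Mic RBF(1)] by simp
    thus ?thesis using MMi RBF(1) by simp
  qed
  have Rt: "transpose_mat ?R \<in> carrier_mat N ?m" using RF(1) by simp
  have eqQ: "transpose_mat ?R * Mi * ?RB = transpose_mat ?R * K"
    unfolding K_def using assoc_mult_mat[OF Rt Mic RBF(1)] .
  have Kval: "K $$ (a,j) = L (pick S a) j" if a: "a < ?m" for a
  proof -
    define v where "v = vec ?m (\<lambda>b. K $$ (b,j) - L (pick S b) j)"
    have vc: "v \<in> carrier_vec ?m" unfolding v_def by simp
    have Mv: "?M *\<^sub>v v = 0\<^sub>v ?m"
    proof (rule eq_vecI)
      show "dim_vec (?M *\<^sub>v v) = dim_vec (0\<^sub>v ?m)" using PF(1) by simp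
      fix c assume "c < dim_vec (0\<^sub>v ?m)"
      hence c: "c < ?m" by simp
      have "(?M *\<^sub>v v) $ c = (\<Sum>b<?m. ?M $$ (c,b) * v $ b)"
        using mult_vec_entry[OF PF(1) vc c] .
      also have "\<dots> = (\<Sum>b<?m. ?M $$ (c,b) * K $$ (b,j)) - (\<Sum>b<?m. P $$ (pick S c, pick S b) * L (pick S b) j)"
        using PF(2)[OF c] by (simp add: v_def algebra_simps sum_subtractf)
      also have "(\<Sum>b<?m. ?M $$ (c,b) * K $$ (b,j)) = (?M * K) $$ (c,j)"
        using mult_entry[OF PF(1) Kc c ij(2)] by simp
      also have "\<dots> = B $$ (pick S c, j)" using MK RBF(2)[OF c ij(2)] by simp
      also have "(\<Sum>b<?m. P $$ (pick S c, pick S b) * L (pick S b) j) = (\<Sum>t\<in>S. P $$ (pick S c, t) * L t j)"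
        using sum_pick[OF fin, of "\<lambda>t. P $$ (pick S c, t) * L t j"] .
      also have "B $$ (pick S c, j) - (\<Sum>t\<in>S. P $$ (pick S c, t) * L t j) = T (pick S c) j"
        using rep pS[OF c] ij(2) by simp
      also have "\<dots> = 0" using zero pick_lt[OF fin c] ij(2) by simp
      finally show "(?M *\<^sub>v v) $ c = 0\<^sub>v ?m $ c" using c by simp
    qed
    have "v = 0\<^sub>v ?m"
    proof (rule ccontr)
      assume "v \<noteq> 0\<^sub>v ?m"
      hence "v \<bullet> (?M *\<^sub>v v) > 0" using pd vc PF(1) unfolding pos_def_mat_def by auto
      thus False using Mv vc by simp
    qed
    hence "v $ a = 0" using a by simp
    thus ?thesis using a by (simp add: v_def)
  qed
  have "(transpose_mat ?R * K) $$ (i,j) = (\<Sum>a<?m. transpose_mat ?R $$ (i,a) * K $$ (a,j))"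
    using mult_entry[OF Rt Kc ij] .
  also have "\<dots> = (\<Sum>a<?m. P $$ (i, pick S a) * L (pick S a) j)"
  proof (rule sum.cong[OF refl])
    fix a assume "a \<in> {..<?m}"
    hence a: "a < ?m" by simp
    have "transpose_mat ?R $$ (i,a) = ?R $$ (a,i)" using RF(1) a ij by simp
    also have "\<dots> = P $$ (pick S a, i)" using RF(2)[OF a ij(1)] .
    also have "\<dots> = P $$ (i, pick S a)" using sym pS[OF a] ij by simp
    finally show "transpose_mat ?R $$ (i,a) * K $$ (a,j) = P $$ (i, pick S a) * L (pick S a) j"
      using Kval[OF a] by simp
  qed
  also have "\<dots> = (\<Sum>t\<in>S. P $$ (i,t) * L t j)"
    using sum_pick[OF fin, of "\<lambda>t. P $$ (i,t) * L t j"] .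
  finally have "(transpose_mat ?R * K) $$ (i,j) = (\<Sum>t\<in>S. P $$ (i,t) * L t j)" .
  moreover have "transpose_mat ?R * K \<in> carrier_mat N n" using Rt Kc by simp
  hence "(B - transpose_mat ?R * K) $$ (i,j) = B $$ (i,j) - (transpose_mat ?R * K) $$ (i,j)"
    using ij by (intro index_minus_mat(1)) (auto dest: carrier_matD)
  ultimately show ?thesis using eqQ minv ij rep by simp
qed

definition XI where "XI X Y lam sb k = fst (XiTh X Y lam sb k)"
definition TH where "TH X Y lam sb k = snd (XiTh X Y lam sb k)"

definition dfun where "dfun X Y lam sb k i = (X * transpose_mat X) $$ (i, sb (Suc k))
   + (if i = sb (Suc k) then lam else 0)
   - (\<Sum>l<k. (XI X Y lam sb k ! l) i * (XI X Y lam sb k ! l) (sb (Suc k)))"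

definition efun where "efun X Y lam sb k j = (Y * transpose_mat X) $$ (j, sb (Suc k))
   - (\<Sum>l<k. (TH X Y lam sb k ! l) j * (XI X Y lam sb k ! l) (sb (Suc k)))"

lemma XiTh_Suc_eq: "XiTh X Y lam sb (Suc k) =
  (XI X Y lam sb k @ [\<lambda>i. dfun X Y lam sb k i / sqrt (dfun X Y lam sb k (sb (Suc k)))],
   TH X Y lam sb k @ [\<lambda>j. efun X Y lam sb k j / sqrt (dfun X Y lam sb k (sb (Suc k)))])"
  by (cases "XiTh X Y lam sb k") (simp add: XI_def TH_def dfun_def efun_def Let_def)

lemma XI_Suc: "XI X Y lam sb (Suc k) = XI X Y lam sb k @ [\<lambda>i. dfun X Y lam sb k i / sqrt (dfun X Y lam sb k (sb (Suc k)))]"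
  using XiTh_Suc_eq[of X Y lam sb k] by (simp add: XI_def)

lemma TH_Suc: "TH X Y lam sb (Suc k) = TH X Y lam sb k @ [\<lambda>j. efun X Y lam sb k j / sqrt (dfun X Y lam sb k (sb (Suc k)))]"
  using XiTh_Suc_eq[of X Y lam sb k] by (simp add: TH_def)

lemma len_XI: "length (XI X Y lam sb k) = k"
  by (induction k) (simp_all add: XI_Suc, simp add: XI_def)

lemma len_TH: "length (TH X Y lam sb k) = k"
  by (induction k) (simp_all add: TH_Suc, simp add: TH_def)

lemma XI_prefix: "l \<le> k \<Longrightarrow> n < l \<Longrightarrow> XI X Y lam sb l ! n = XI X Y lam sb k ! n"
proof (induction k rule: dec_induct)
  case base then show ?case by simp
next
  case (step k) then show ?case by (simp add: XI_Suc nth_append len_XI)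
qed

lemma TH_prefix: "l \<le> k \<Longrightarrow> n < l \<Longrightarrow> TH X Y lam sb l ! n = TH X Y lam sb k ! n"
proof (induction k rule: dec_induct)
  case base then show ?case by simp
next
  case (step k) then show ?case by (simp add: TH_Suc nth_append len_TH)
qed

definition Txx where "Txx X Y lam sb k i j = Pxx X lam $$ (i,j)
   - (\<Sum>l<k. (XI X Y lam sb k ! l) i * (XI X Y lam sb k ! l) j)"
definition Txy where "Txy X Y lam sb k i j = Pxy X Y $$ (i,j)
   - (\<Sum>l<k. (XI X Y lam sb k ! l) i * (TH X Y lam sb k ! l) j)"

lemma Txx_Suc: "Txx X Y lam sb (Suc k) i j = Txx X Y lam sb k i j
   - dfun X Y lam sb k i / sqrt (dfun X Y lam sb k (sb (Suc k))) * (dfun X Y lam sb k j / sqrt (dfun X Y lam sb k (sb (Suc k))))"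
proof -
  have "(\<Sum>l<Suc k. (XI X Y lam sb (Suc k) ! l) i * (XI X Y lam sb (Suc k) ! l) j)
     = (\<Sum>l<k. (XI X Y lam sb k ! l) i * (XI X Y lam sb k ! l) j)
       + dfun X Y lam sb k i / sqrt (dfun X Y lam sb k (sb (Suc k))) * (dfun X Y lam sb k j / sqrt (dfun X Y lam sb k (sb (Suc k))))"
    by (simp add: XI_Suc nth_append len_XI)
  thus ?thesis unfolding Txx_def by simp
qed

lemma Txy_Suc: "Txy X Y lam sb (Suc k) i j = Txy X Y lam sb k i j
   - dfun X Y lam sb k i / sqrt (dfun X Y lam sb k (sb (Suc k))) * (efun X Y lam sb k j / sqrt (dfun X Y lam sb k (sb (Suc k))))"
proof -
  have "(\<Sum>l<Suc k. (XI X Y lam sb (Suc k) ! l) i * (TH X Y lam sb (Suc k) ! l) j)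
     = (\<Sum>l<k. (XI X Y lam sb k ! l) i * (TH X Y lam sb k ! l) j)
       + dfun X Y lam sb k i / sqrt (dfun X Y lam sb k (sb (Suc k))) * (efun X Y lam sb k j / sqrt (dfun X Y lam sb k (sb (Suc k))))"
    by (simp add: XI_Suc TH_Suc nth_append len_XI len_TH)
  thus ?thesis unfolding Txy_def by simp
qed

definition Inv where "Inv X Y lam sb N Ny k \<longleftrightarrow>
 (\<exists>L. \<forall>i<N. \<forall>j<N. Txx X Y lam sb k i j = Pxx X lam $$ (i,j) - (\<Sum>t\<in>Sbar sb k. Pxx X lam $$ (i,t) * L t j)) \<and>
 (\<exists>L. \<forall>i<N. \<forall>j<Ny. Txy X Y lam sb k i j = Pxy X Y $$ (i,j) - (\<Sum>t\<in>Sbar sb k. Pxx X lam $$ (i,t) * L t j)) \<and>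
 (\<forall>t\<in>Sbar sb k. \<forall>j<N. Txx X Y lam sb k t j = 0) \<and>
 (\<forall>t\<in>Sbar sb k. \<forall>j<Ny. Txy X Y lam sb k t j = 0) \<and>
 (\<forall>i<N. \<forall>j<N. Txx X Y lam sb k i j = Txx X Y lam sb k j i)"

lemma Sbar_0: "Sbar sb 0 = {}" by (simp add: Sbar_def)

lemma Sbar_Suc: "Sbar sb (Suc k) = insert (sb (Suc k)) (Sbar sb k)"
  by (simp add: Sbar_def atLeastAtMostSuc_conv)

lemma finite_Sbar: "finite (Sbar sb k)" by (simp add: Sbar_def)

context
  fixes N Ny M p :: nat and X Y :: "real mat" and lam :: real and sb :: "nat \<Rightarrow> nat"
  assumes Xc: "X \<in> carrier_mat N M" and Yc: "Y \<in> carrier_mat Ny M"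
    and greedy: "is_greedy X Y lam p sb"
begin

lemma Pxx_c: "Pxx X lam \<in> carrier_mat N N"
  using Xc by (simp add: Pxx_def)

lemma Pxy_c: "Pxy X Y \<in> carrier_mat N Ny"
  using Xc Yc by (simp add: Pxy_def)

lemma XXt_sym: "i < N \<Longrightarrow> j < N \<Longrightarrow> (X * transpose_mat X) $$ (i,j) = (X * transpose_mat X) $$ (j,i)"
  using Xc by (simp add: comm_scalar_prod[of _ M])

lemma Pxx_entry: "i < N \<Longrightarrow> j < N \<Longrightarrow> Pxx X lam $$ (i,j) = (X * transpose_mat X) $$ (i,j) + (if i = j then lam else 0)"
  using Xc by (simp add: Pxx_def)

lemma Pxx_sym: "\<forall>i<N. \<forall>j<N. Pxx X lam $$ (i,j) = Pxx X lam $$ (j,i)"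
  using Pxx_entry XXt_sym by simp

lemma YXt: "j < Ny \<Longrightarrow> s < N \<Longrightarrow> (Y * transpose_mat X) $$ (j,s) = Pxy X Y $$ (s,j)"
  using Xc Yc by (simp add: Pxy_def comm_scalar_prod[of _ M])

lemma greedy_step:
  assumes "Suc k \<le> p"
  shows "sb (Suc k) < N" "sb (Suc k) \<notin> Sbar sb k"
    "feasible X lam (insert (sb (Suc k)) (Sbar sb k))"
proof -
  have "Suc k \<in> {1..p}" using assms by simp
  hence "sb (Suc k) \<in> Ifeas X lam sb (Suc k)" using greedy unfolding is_greedy_def by blast
  thus "sb (Suc k) < N" "sb (Suc k) \<notin> Sbar sb k"
    "feasible X lam (insert (sb (Suc k)) (Sbar sb k))"
    using Xc unfolding Ifeas_def by auto
qed

lemma Sbar_sub: "k \<le> p \<Longrightarrow> Sbar sb k \<subseteq> {..<N}"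
proof (induction k)
  case 0 then show ?case by (simp add: Sbar_0)
next
  case (Suc k) then show ?case using greedy_step[of k] by (simp add: Sbar_Suc)
qed

lemma dfun_T: "Suc k \<le> p \<Longrightarrow> i < N \<Longrightarrow> dfun X Y lam sb k i = Txx X Y lam sb k i (sb (Suc k))"
  using greedy_step(1)[of k] Pxx_entry[of i "sb (Suc k)"]
  by (simp add: dfun_def Txx_def)

lemma efun_T: "Suc k \<le> p \<Longrightarrow> j < Ny \<Longrightarrow> efun X Y lam sb k j = Txy X Y lam sb k (sb (Suc k)) j"
  using greedy_step(1)[of k] YXt[of j "sb (Suc k)"]
  by (simp add: efun_def Txy_def mult.commute)

lemma Inv_all: "k \<le> p \<Longrightarrow> Inv X Y lam sb N Ny k \<and> (k < p \<longrightarrow> Txx X Y lam sb k (sb (Suc k)) (sb (Suc k)) > 0)"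
proof (induction k)
  case 0
  have "Inv X Y lam sb N Ny 0"
    unfolding Inv_def using Pxx_sym by (simp add: Sbar_0 Txx_def Txy_def)
  moreover have "0 < p \<longrightarrow> Txx X Y lam sb 0 (sb (Suc 0)) (sb (Suc 0)) > 0"
  proof
    assume "0 < p"
    hence sp: "Suc 0 \<le> p" by simp
    show "Txx X Y lam sb 0 (sb (Suc 0)) (sb (Suc 0)) > 0"
      using pos_schur[OF Pxx_c, of "sb (Suc 0)" "{}" "\<lambda>i. Txx X Y lam sb 0 i (sb (Suc 0))" "\<lambda>_. 0"]
        greedy_step[OF sp] Sbar_sub[OF sp] by (simp add: Sbar_Suc Sbar_0 Txx_def feasible_def)
  qed
  ultimately show ?case by blast
next
  case (Suc k)
  have kp: "Suc k \<le> p" using Suc.prems .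
  have IH: "Inv X Y lam sb N Ny k" and dpos: "Txx X Y lam sb k (sb (Suc k)) (sb (Suc k)) > 0"
    using Suc.IH kp by auto
  define s where "s = sb (Suc k)"
  define S where "S = Sbar sb k"
  define ds where "ds = Txx X Y lam sb k s s"
  have sN: "s < N" and sS: "s \<notin> S" and feas: "feasible X lam (insert s S)"
    using greedy_step[OF kp] by (simp_all add: s_def S_def)
  have SS: "Sbar sb (Suc k) = insert s S" by (simp add: Sbar_Suc s_def S_def)
  have finS: "finite S" by (simp add: S_def finite_Sbar)
  have dpos': "ds > 0" using dpos by (simp add: ds_def s_def)
  obtain Lx where Lx: "\<forall>i<N. \<forall>j<N. Txx X Y lam sb k i j = Pxx X lam $$ (i,j) - (\<Sum>t\<in>S. Pxx X lam $$ (i,t) * Lx t j)"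
    using IH unfolding Inv_def S_def by blast
  obtain Ly where Ly: "\<forall>i<N. \<forall>j<Ny. Txy X Y lam sb k i j = Pxy X Y $$ (i,j) - (\<Sum>t\<in>S. Pxx X lam $$ (i,t) * Ly t j)"
    using IH unfolding Inv_def S_def by blast
  have zx: "\<forall>t\<in>S. \<forall>j<N. Txx X Y lam sb k t j = 0" and zy: "\<forall>t\<in>S. \<forall>j<Ny. Txy X Y lam sb k t j = 0"
    and sy: "\<forall>i<N. \<forall>j<N. Txx X Y lam sb k i j = Txx X Y lam sb k j i"
    using IH unfolding Inv_def S_def by auto
  have sq: "sqrt ds * sqrt ds = ds" using dpos' by simp
  have Tx1: "Txx X Y lam sb (Suc k) i j = Txx X Y lam sb k i j - Txx X Y lam sb k i s * Txx X Y lam sb k j s / ds"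
    if "i < N" "j < N" for i j
  proof -
    have "Txx X Y lam sb (Suc k) i j = Txx X Y lam sb k i j
       - Txx X Y lam sb k i s / sqrt ds * (Txx X Y lam sb k j s / sqrt ds)"
      using Txx_Suc[of X Y lam sb k i j] dfun_T[OF kp] that sN by (simp add: s_def ds_def)
    also have "\<dots> = Txx X Y lam sb k i j - Txx X Y lam sb k i s * Txx X Y lam sb k j s / ds"
      using sq by (simp add: field_simps)
    finally show ?thesis .
  qed
  have Ty1: "Txy X Y lam sb (Suc k) i j = Txy X Y lam sb k i j - Txx X Y lam sb k i s * Txy X Y lam sb k s j / ds"
    if "i < N" "j < Ny" for i j
  proof -
    have "Txy X Y lam sb (Suc k) i j = Txy X Y lam sb k i j
       - Txx X Y lam sb k i s / sqrt ds * (Txy X Y lam sb k s j / sqrt ds)"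
      using Txy_Suc[of X Y lam sb k i j] dfun_T[OF kp] efun_T[OF kp] that sN by (simp add: s_def ds_def)
    also have "\<dots> = Txy X Y lam sb k i j - Txx X Y lam sb k i s * Txy X Y lam sb k s j / ds"
      using sq by (simp add: field_simps)
    finally show ?thesis .
  qed
  have inv1: "\<exists>L. \<forall>i<N. \<forall>j<N. Txx X Y lam sb (Suc k) i j = Pxx X lam $$ (i,j) - (\<Sum>t\<in>Sbar sb (Suc k). Pxx X lam $$ (i,t) * L t j)"
  proof (intro exI allI impI)
    fix i j assume i: "i < N" and j: "j < N"
    define c where "c = Txx X Y lam sb k j s / ds"
    let ?L = "\<lambda>t j. if t = s then Txx X Y lam sb k j s / ds else Lx t j - Lx t s * (Txx X Y lam sb k j s / ds)"
    have "(\<Sum>t\<in>Sbar sb (Suc k). Pxx X lam $$ (i,t) * ?L t j)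
        = Pxx X lam $$ (i,s) * c + (\<Sum>t\<in>S. Pxx X lam $$ (i,t) * (Lx t j - Lx t s * c))"
    proof -
      have e0: "(\<Sum>t\<in>S. Pxx X lam $$ (i,t) * ?L t j) = (\<Sum>t\<in>S. Pxx X lam $$ (i,t) * (Lx t j - Lx t s * c))"
        by (intro sum.cong) (use sS in \<open>auto simp: c_def\<close>)
      have "(\<Sum>t\<in>Sbar sb (Suc k). Pxx X lam $$ (i,t) * ?L t j) = Pxx X lam $$ (i,s) * ?L s j + (\<Sum>t\<in>S. Pxx X lam $$ (i,t) * ?L t j)"
        unfolding SS by (simp only: sum.insert[OF finS sS])
      also have "\<dots> = Pxx X lam $$ (i,s) * c + (\<Sum>t\<in>S. Pxx X lam $$ (i,t) * (Lx t j - Lx t s * c))"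
        using e0 by (simp add: c_def)
      finally show ?thesis .
    qed
    also have "\<dots> = Pxx X lam $$ (i,s) * c + (\<Sum>t\<in>S. Pxx X lam $$ (i,t) * Lx t j) - c * (\<Sum>t\<in>S. Pxx X lam $$ (i,t) * Lx t s)"
      by (simp add: algebra_simps sum_subtractf sum_distrib_left)
    finally have e: "(\<Sum>t\<in>Sbar sb (Suc k). Pxx X lam $$ (i,t) * ?L t j)
        = Pxx X lam $$ (i,s) * c + (\<Sum>t\<in>S. Pxx X lam $$ (i,t) * Lx t j) - c * (\<Sum>t\<in>S. Pxx X lam $$ (i,t) * Lx t s)" .
    have "Txx X Y lam sb (Suc k) i j = Txx X Y lam sb k i j - Txx X Y lam sb k i s * c"
      using Tx1[OF i j] by (simp add: c_def)
    also have "\<dots> = Pxx X lam $$ (i,j) - (\<Sum>t\<in>Sbar sb (Suc k). Pxx X lam $$ (i,t) * ?L t j)"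
    proof -
      have a1: "Txx X Y lam sb k i j = Pxx X lam $$ (i,j) - (\<Sum>t\<in>S. Pxx X lam $$ (i,t) * Lx t j)"
        using Lx i j by blast
      have a2: "Txx X Y lam sb k i s = Pxx X lam $$ (i,s) - (\<Sum>t\<in>S. Pxx X lam $$ (i,t) * Lx t s)"
        using Lx i sN by blast
      show ?thesis unfolding e a1 a2 by (simp add: algebra_simps)
    qed
    finally show "Txx X Y lam sb (Suc k) i j = Pxx X lam $$ (i,j) - (\<Sum>t\<in>Sbar sb (Suc k). Pxx X lam $$ (i,t) * ?L t j)" .
  qed
  have inv2: "\<exists>L. \<forall>i<N. \<forall>j<Ny. Txy X Y lam sb (Suc k) i j = Pxy X Y $$ (i,j) - (\<Sum>t\<in>Sbar sb (Suc k). Pxx X lam $$ (i,t) * L t j)"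
  proof (intro exI allI impI)
    fix i j assume i: "i < N" and j: "j < Ny"
    define c where "c = Txy X Y lam sb k s j / ds"
    let ?L = "\<lambda>t j. if t = s then Txy X Y lam sb k s j / ds else Ly t j - Lx t s * (Txy X Y lam sb k s j / ds)"
    have "(\<Sum>t\<in>Sbar sb (Suc k). Pxx X lam $$ (i,t) * ?L t j)
        = Pxx X lam $$ (i,s) * c + (\<Sum>t\<in>S. Pxx X lam $$ (i,t) * (Ly t j - Lx t s * c))"
    proof -
      have e0: "(\<Sum>t\<in>S. Pxx X lam $$ (i,t) * ?L t j) = (\<Sum>t\<in>S. Pxx X lam $$ (i,t) * (Ly t j - Lx t s * c))"
        by (intro sum.cong) (use sS in \<open>auto simp: c_def\<close>)
      have "(\<Sum>t\<in>Sbar sb (Suc k). Pxx X lam $$ (i,t) * ?L t j) = Pxx X lam $$ (i,s) * ?L s j + (\<Sum>t\<in>S. Pxx X lam $$ (i,t) * ?L t j)"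
        unfolding SS by (simp only: sum.insert[OF finS sS])
      also have "\<dots> = Pxx X lam $$ (i,s) * c + (\<Sum>t\<in>S. Pxx X lam $$ (i,t) * (Ly t j - Lx t s * c))"
        using e0 by (simp add: c_def)
      finally show ?thesis .
    qed
    also have "\<dots> = Pxx X lam $$ (i,s) * c + (\<Sum>t\<in>S. Pxx X lam $$ (i,t) * Ly t j) - c * (\<Sum>t\<in>S. Pxx X lam $$ (i,t) * Lx t s)"
      by (simp add: algebra_simps sum_subtractf sum_distrib_left)
    finally have e: "(\<Sum>t\<in>Sbar sb (Suc k). Pxx X lam $$ (i,t) * ?L t j)
        = Pxx X lam $$ (i,s) * c + (\<Sum>t\<in>S. Pxx X lam $$ (i,t) * Ly t j) - c * (\<Sum>t\<in>S. Pxx X lam $$ (i,t) * Lx t s)" .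
    have "Txy X Y lam sb (Suc k) i j = Txy X Y lam sb k i j - Txx X Y lam sb k i s * c"
      using Ty1[OF i j] by (simp add: c_def)
    also have "\<dots> = Pxy X Y $$ (i,j) - (\<Sum>t\<in>Sbar sb (Suc k). Pxx X lam $$ (i,t) * ?L t j)"
    proof -
      have a1: "Txy X Y lam sb k i j = Pxy X Y $$ (i,j) - (\<Sum>t\<in>S. Pxx X lam $$ (i,t) * Ly t j)"
        using Ly i j by blast
      have a2: "Txx X Y lam sb k i s = Pxx X lam $$ (i,s) - (\<Sum>t\<in>S. Pxx X lam $$ (i,t) * Lx t s)"
        using Lx i sN by blast
      show ?thesis unfolding e a1 a2 by (simp add: algebra_simps)
    qed
    finally show "Txy X Y lam sb (Suc k) i j = Pxy X Y $$ (i,j) - (\<Sum>t\<in>Sbar sb (Suc k). Pxx X lam $$ (i,t) * ?L t j)" .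
  qed
  have inv3: "\<forall>t\<in>Sbar sb (Suc k). \<forall>j<N. Txx X Y lam sb (Suc k) t j = 0"
  proof (intro ballI allI impI)
    fix t j assume t: "t \<in> Sbar sb (Suc k)" and j: "j < N"
    have tN: "t < N" using t SS sN Sbar_sub[of k] kp S_def by auto
    show "Txx X Y lam sb (Suc k) t j = 0"
    proof (cases "t = s")
      case True
      thus ?thesis using Tx1[OF tN j] sy sN j dpos' by (simp add: ds_def)
    next
      case False
      hence "t \<in> S" using t SS by simp
      thus ?thesis using Tx1[OF tN j] zx sN j by simp
    qed
  qed
  have inv4: "\<forall>t\<in>Sbar sb (Suc k). \<forall>j<Ny. Txy X Y lam sb (Suc k) t j = 0"
  proof (intro ballI allI impI)
    fix t j assume t: "t \<in> Sbar sb (Suc k)" and j: "j < Ny"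
    have tN: "t < N" using t SS sN Sbar_sub[of k] kp S_def by auto
    show "Txy X Y lam sb (Suc k) t j = 0"
    proof (cases "t = s")
      case True
      thus ?thesis using Ty1[OF tN j] dpos' by (simp add: ds_def)
    next
      case False
      hence "t \<in> S" using t SS by simp
      thus ?thesis using Ty1[OF tN j] zx zy sN j by simp
    qed
  qed
  have inv5: "\<forall>i<N. \<forall>j<N. Txx X Y lam sb (Suc k) i j = Txx X Y lam sb (Suc k) j i"
    using Tx1 sy by (simp add: mult.commute)
  have Inv1: "Inv X Y lam sb N Ny (Suc k)"
    unfolding Inv_def using inv1 inv2 inv3 inv4 inv5 by blast
  moreover have "Suc k < p \<longrightarrow> Txx X Y lam sb (Suc k) (sb (Suc (Suc k))) (sb (Suc (Suc k))) > 0"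
  proof
    assume "Suc k < p"
    hence sp: "Suc (Suc k) \<le> p" by simp
    obtain L where L: "\<forall>i<N. \<forall>j<N. Txx X Y lam sb (Suc k) i j = Pxx X lam $$ (i,j) - (\<Sum>t\<in>Sbar sb (Suc k). Pxx X lam $$ (i,t) * L t j)"
      using inv1 by blast
    note g = greedy_step[OF sp]
    show "Txx X Y lam sb (Suc k) (sb (Suc (Suc k))) (sb (Suc (Suc k))) > 0"
      by (rule pos_schur[OF Pxx_c, of "sb (Suc (Suc k))" "Sbar sb (Suc k)" _ "\<lambda>t. L t (sb (Suc (Suc k)))"])
        (use g Sbar_sub[OF sp] L inv3 in \<open>auto simp: Sbar_Suc feasible_def\<close>)
  qed
  ultimately show ?case by blast
qed

lemma Q_eqs:
  assumes kp: "k \<le> p" and i: "i < N"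
  shows "j < N \<Longrightarrow> Qxx X lam (Sbar sb k) $$ (i,j) = Txx X Y lam sb k i j"
    and "j < Ny \<Longrightarrow> Qxy X Y lam (Sbar sb k) $$ (i,j) = Txy X Y lam sb k i j"
proof -
  have I: "Inv X Y lam sb N Ny k" using Inv_all[OF kp] by blast
  obtain Lx where Lx: "\<forall>i<N. \<forall>j<N. Txx X Y lam sb k i j = Pxx X lam $$ (i,j) - (\<Sum>t\<in>Sbar sb k. Pxx X lam $$ (i,t) * Lx t j)"
    using I unfolding Inv_def by blast
  obtain Ly where Ly: "\<forall>i<N. \<forall>j<Ny. Txy X Y lam sb k i j = Pxy X Y $$ (i,j) - (\<Sum>t\<in>Sbar sb k. Pxx X lam $$ (i,t) * Ly t j)"
    using I unfolding Inv_def by blast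
  have zx: "\<forall>t\<in>Sbar sb k. \<forall>j<N. Txx X Y lam sb k t j = 0" and zy: "\<forall>t\<in>Sbar sb k. \<forall>j<Ny. Txy X Y lam sb k t j = 0"
    using I unfolding Inv_def by auto
  show "j < N \<Longrightarrow> Qxx X lam (Sbar sb k) $$ (i,j) = Txx X Y lam sb k i j"
  proof (cases k)
    case 0
    assume j: "j < N"
    thus ?thesis using 0 by (simp add: Qxx_def Sbar_0 Txx_def)
  next
    case (Suc k')
    assume j: "j < N"
    have ne: "Sbar sb k \<noteq> {}" using Suc by (simp add: Sbar_Suc)
    have fe: "pos_def_mat (prin_sub (Pxx X lam) (Sbar sb k))"
      using greedy_step(3)[of k'] Suc kp by (simp add: Sbar_Suc feasible_def)
    show ?thesis
      using Q_char[OF Pxx_c Pxx_c Pxx_sym Sbar_sub[OF kp] fe Lx zx i j] ne by (simp add: Qxx_def)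
  qed
  show "j < Ny \<Longrightarrow> Qxy X Y lam (Sbar sb k) $$ (i,j) = Txy X Y lam sb k i j"
  proof (cases k)
    case 0
    assume j: "j < Ny"
    thus ?thesis using 0 by (simp add: Qxy_def Sbar_0 Txy_def)
  next
    case (Suc k')
    assume j: "j < Ny"
    have ne: "Sbar sb k \<noteq> {}" using Suc by (simp add: Sbar_Suc)
    have fe: "pos_def_mat (prin_sub (Pxx X lam) (Sbar sb k))"
      using greedy_step(3)[of k'] Suc kp by (simp add: Sbar_Suc feasible_def)
    show ?thesis
      using Q_char[OF Pxx_c Pxy_c Pxx_sym Sbar_sub[OF kp] fe Ly zy i j] ne by (simp add: Qxy_def)
  qed
qed

end

lemma sq_expand:
  fixes a t :: "nat \<Rightarrow> real"
  shows "(\<Sum>j<n. (a j - x * t j)^2) = (\<Sum>j<n. (a j)^2) - x * (2 * (\<Sum>j<n. a j * t j) - (\<Sum>j<n. (t j)^2) * x)"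
proof -
  have "(\<Sum>j<n. (a j - x * t j)^2) = (\<Sum>j<n. (a j)^2 - 2 * x * (a j * t j) + x * x * (t j)^2)"
    by (rule sum.cong) (simp_all add: power2_eq_square algebra_simps)
  also have "\<dots> = (\<Sum>j<n. (a j)^2) - 2 * x * (\<Sum>j<n. a j * t j) + x * x * (\<Sum>j<n. (t j)^2)"
    by (simp add: sum.distrib sum_subtractf sum_distrib_left)
  finally show ?thesis by (simp add: algebra_simps)
qed

lemma lin_aux:
  fixes F x D E T :: real
  shows "F - x * (2 * (D - E) - T * x) = F - x * (2 * D - 2 * E - T * x)"
  by (simp add: algebra_simps)

theorem theorem2:
  fixes N Ny M p :: nat and X Y :: "real mat" and lam :: real and sb :: "nat \<Rightarrow> nat" and k i :: nat
  assumes "X \<in> carrier_mat N M" and "Y \<in> carrier_mat Ny M"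
    and "p \<le> N" and "lam \<ge> 0"
    and "is_greedy X Y lam p sb"
    and "k \<in> {1..p}" and "i \<in> Ifeas X lam sb k"
  shows "f_val X Y lam sb k i = f_val X Y lam sb (k - 1) i
           - xi X Y lam sb k i *
             (2 * (\<Sum>j<Ny. (X * transpose_mat Y) $$ (i, j) * theta X Y lam sb k j)
              - 2 * (\<Sum>l\<in>{1..<k}. xi X Y lam sb l i *
                        (\<Sum>j<Ny. theta X Y lam sb l j * theta X Y lam sb k j))
              - (\<Sum>j<Ny. (theta X Y lam sb k j)^2) * xi X Y lam sb k i)
         \<and> g_val X lam sb k i = g_val X lam sb (k - 1) i - xi X Y lam sb k i * xi X Y lam sb k i"
proof -
  note Xc = assms(1) and Yc = assms(2) and gr = assms(5)
  obtain k' where k: "k = Suc k'" using assms(6) by (cases k) auto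
  have kp: "k \<le> p" and k'p: "k' \<le> p" using assms(6) k by auto
  have iN: "i < N" using assms(7) Xc unfolding Ifeas_def by auto
  have dY: "dim_row Y = Ny" using Yc by auto
  let ?x = "xi X Y lam sb k i"
  let ?t = "theta X Y lam sb k"
  have xk: "xi X Y lam sb k = (\<lambda>i. dfun X Y lam sb k' i / sqrt (dfun X Y lam sb k' (sb (Suc k'))))"
    unfolding xi_def k using XI_Suc[of X Y lam sb k'] len_XI[of X Y lam sb k']
    by (simp add: XI_def nth_append)
  have tk: "theta X Y lam sb k = (\<lambda>j. efun X Y lam sb k' j / sqrt (dfun X Y lam sb k' (sb (Suc k'))))"
    unfolding theta_def k using TH_Suc[of X Y lam sb k'] len_TH[of X Y lam sb k']
    by (simp add: TH_def nth_append)
  have g: "g_val X lam sb k i = g_val X lam sb (k - 1) i - ?x * ?x"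
  proof -
    have "g_val X lam sb k i = Txx X Y lam sb k i i"
      unfolding g_val_def using Q_eqs(1)[OF Xc Yc gr kp iN iN] .
    also have "\<dots> = Txx X Y lam sb k' i i - ?x * ?x"
      unfolding k Txx_Suc xk[unfolded k] by simp
    also have "Txx X Y lam sb k' i i = g_val X lam sb (k - 1) i"
      unfolding g_val_def using Q_eqs(1)[OF Xc Yc gr k'p iN iN] k by simp
    finally show ?thesis .
  qed
  define a where "a j = Txy X Y lam sb k' i j" for j
  have fk: "f_val X Y lam sb k i = (\<Sum>j<Ny. (a j - ?x * ?t j)^2)"
  proof -
    have "f_val X Y lam sb k i = (\<Sum>j<Ny. (Txy X Y lam sb k i j)^2)"
      unfolding f_val_def dY using Q_eqs(2)[OF Xc Yc gr kp iN] by simp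
    also have "\<dots> = (\<Sum>j<Ny. (a j - ?x * ?t j)^2)"
      unfolding a_def k Txy_Suc xk[unfolded k] tk[unfolded k] by simp
    finally show ?thesis .
  qed
  have fk': "f_val X Y lam sb (k - 1) i = (\<Sum>j<Ny. (a j)^2)"
    unfolding f_val_def dY a_def using Q_eqs(2)[OF Xc Yc gr k'p iN] k by simp
  have reidx: "(\<Sum>l\<in>{1..<k}. xi X Y lam sb l i * (\<Sum>j<Ny. theta X Y lam sb l j * ?t j))
     = (\<Sum>l<k'. (XI X Y lam sb k' ! l) i * (\<Sum>j<Ny. (TH X Y lam sb k' ! l) j * ?t j))"
  proof -
    have s: "{1..<k} = Suc ` {..<k'}" unfolding k atLeastLessThanSuc_atLeastAtMost image_Suc_lessThan ..
    have "(\<Sum>l\<in>{1..<k}. xi X Y lam sb l i * (\<Sum>j<Ny. theta X Y lam sb l j * ?t j))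
       = (\<Sum>l<k'. xi X Y lam sb (Suc l) i * (\<Sum>j<Ny. theta X Y lam sb (Suc l) j * ?t j))"
      unfolding s by (subst sum.reindex) auto
    also have "\<dots> = (\<Sum>l<k'. (XI X Y lam sb k' ! l) i * (\<Sum>j<Ny. (TH X Y lam sb k' ! l) j * ?t j))"
    proof (rule sum.cong[OF refl])
      fix l assume "l \<in> {..<k'}"
      hence l: "Suc l \<le> k'" by simp
      have "xi X Y lam sb (Suc l) = XI X Y lam sb k' ! l"
        unfolding xi_def XI_def[symmetric] using XI_prefix[OF l, of l] by simp
      moreover have "theta X Y lam sb (Suc l) = TH X Y lam sb k' ! l"
        unfolding theta_def TH_def[symmetric] using TH_prefix[OF l, of l] by simp
      ultimately show "xi X Y lam sb (Suc l) i * (\<Sum>j<Ny. theta X Y lam sb (Suc l) j * ?t j)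
         = (XI X Y lam sb k' ! l) i * (\<Sum>j<Ny. (TH X Y lam sb k' ! l) j * ?t j)" by simp
    qed
    finally show ?thesis .
  qed
  have cross: "(\<Sum>j<Ny. a j * ?t j) = (\<Sum>j<Ny. (X * transpose_mat Y) $$ (i, j) * ?t j)
      - (\<Sum>l<k'. (XI X Y lam sb k' ! l) i * (\<Sum>j<Ny. (TH X Y lam sb k' ! l) j * ?t j))"
  proof -
    have "(\<Sum>j<Ny. a j * ?t j) = (\<Sum>j<Ny. (X * transpose_mat Y) $$ (i, j) * ?t j
        - (\<Sum>l<k'. (XI X Y lam sb k' ! l) i * ((TH X Y lam sb k' ! l) j * ?t j)))"
      unfolding a_def Txy_def Pxy_def by (simp only: left_diff_distrib sum_distrib_right mult.assoc)
    also have "\<dots> = (\<Sum>j<Ny. (X * transpose_mat Y) $$ (i, j) * ?t j)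
        - (\<Sum>j<Ny. \<Sum>l<k'. (XI X Y lam sb k' ! l) i * ((TH X Y lam sb k' ! l) j * ?t j))"
      by (simp add: sum_subtractf)
    also have "(\<Sum>j<Ny. \<Sum>l<k'. (XI X Y lam sb k' ! l) i * ((TH X Y lam sb k' ! l) j * ?t j))
       = (\<Sum>l<k'. (XI X Y lam sb k' ! l) i * (\<Sum>j<Ny. (TH X Y lam sb k' ! l) j * ?t j))"
      by (subst sum.swap) (simp add: sum_distrib_left)
    finally show ?thesis .
  qed
  have f: "f_val X Y lam sb k i = f_val X Y lam sb (k - 1) i
           - ?x * (2 * (\<Sum>j<Ny. (X * transpose_mat Y) $$ (i, j) * ?t j)
              - 2 * (\<Sum>l\<in>{1..<k}. xi X Y lam sb l i * (\<Sum>j<Ny. theta X Y lam sb l j * ?t j))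
              - (\<Sum>j<Ny. (?t j)^2) * ?x)"
    unfolding fk fk' sq_expand reidx cross by (rule lin_aux)
  show ?thesis using f g by blast
qed

end
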